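(* For every real $p\ge1$ there exist constants $c_p,c_p'>0$, independent of $L$, such that for all integers $L\ge1$, \[ c_p\le E_Q\big[(\bar\tau^{(L)}_1)^p\big]^{1/p}\le c_p',\qquad\text{where }\bar\tau^{(L)}_1=4^{-L}\tau^{(L)}_1. \]
   Context: $\epsilon=(\epsilon_1,\epsilon_2,\dots)\in\{-1,0,1\}^{\mathbb{N}}$ has product law $Q$ with $Q(\epsilon_1=1)=Q(\epsilon_1=-1)=\tfrac14$, $Q(\epsilon_1=0)=\tfrac12$. For an integer $L\ge1$, $\tau^{(L)}_0=0$ and for $n\ge1$, $\tau^{(L)}_n=\inf\{j\ge\tau^{(L)}_{n-1}+L:\ (\epsilon_{j-L},\dots,\epsilon_{j-1})=(1,\dots,1),\ \epsilon_j\in\{-1,0\}\}$. *)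

theory Defs
  imports "HOL-Probability.Probability"
begin

definition eps_pmf :: "int pmf" where
  "eps_pmf = pmf_of_multiset {#-1, 0, 0, 1#}"

text \<open>Product law Q on sequences. The sequence is indexed from 0:
  w i stands for the paper's epsilon_(i+1).\<close>
definition Q :: "(nat \<Rightarrow> int) measure" where
  "Q = (\<Pi>\<^sub>M i\<in>(UNIV::nat set). measure_pmf eps_pmf)"

definition eps :: "(nat \<Rightarrow> int) \<Rightarrow> nat \<Rightarrow> int" where
  "eps w k = w (k - 1)"

text \<open>The condition defining tau_1^(L) at time j (with j - L \<ge> 1 so that all
  indices are defined): epsilon_(j-L) = ... = epsilon_(j-1) = 1 and epsilon_j \<in> {-1,0}.\<close>
definition hit :: "nat \<Rightarrow> (nat \<Rightarrow> int) \<Rightarrow> nat \<Rightarrow> bool" where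
  "hit L w j \<longleftrightarrow> j \<ge> L + 1 \<and> (\<forall>k\<in>{j-L..j-1}. eps w k = 1) \<and> eps w j \<in> {-1, 0}"

text \<open>tau_1^(L) = inf {j \<ge> tau_0 + L : ...} with tau_0 = 0; infimum of the empty set is \<infinity>.\<close>
definition tau1 :: "nat \<Rightarrow> (nat \<Rightarrow> int) \<Rightarrow> enat" where
  "tau1 L w = (if \<exists>j. hit L w j then enat (LEAST j. hit L w j) else \<infinity>)"

definition taubar_pow :: "real \<Rightarrow> nat \<Rightarrow> (nat \<Rightarrow> int) \<Rightarrow> ennreal" where
  "taubar_pow p L w = (case tau1 L w of enat n \<Rightarrow> ennreal ((real n / 4 ^ L) powr p) | \<infinity> \<Rightarrow> \<infinity>)"

end

theory Submission
  imports Defs "HOL-Real_Asymp.Real_Asymp"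
begin


definition NH :: "nat \<Rightarrow> nat \<Rightarrow> (nat \<Rightarrow> int) \<Rightarrow> bool" where
  "NH L n w \<longleftrightarrow> \<not>(\<exists>j\<le>n. hit L w j)"
definition pat :: "nat \<Rightarrow> (nat \<Rightarrow> int) \<Rightarrow> bool" where
  "pat L w \<longleftrightarrow> (\<forall>i<L. w i = 1) \<and> w L \<in> {-1,0}"
lemma pred_coord: "Measurable.pred Q (\<lambda>w. w i \<in> A)"
    unfolding Q_def by measurable
lemma pred_coord_eq: "Measurable.pred Q (\<lambda>w. w i = c)"
    using pred_coord[of i "{c}"] by simp
lemma pred_hit: "Measurable.pred Q (\<lambda>w. hit L w j)"
  unfolding hit_def eps_def
  by (intro pred_intros_conj1' pred_intros_logic pred_intros_finite(3) pred_coord pred_coord_eq finite_atLeastAtMost)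
lemma pred_NH: "Measurable.pred Q (\<lambda>w. NH L n w)"
  unfolding NH_def
  by (intro pred_intros_logic pred_intros_countable(2) pred_intros_conj1' pred_hit)
lemma pred_pat: "Measurable.pred Q (\<lambda>w. pat L w)"
  unfolding pat_def
  by (intro pred_intros_logic pred_intros_countable(1) pred_intros_imp' pred_coord pred_coord_eq)
interpretation QS: sequence_space "measure_pmf eps_pmf"
  by unfold_locales

lemma space_Q: "space Q = UNIV" by (simp add: Q_def space_PiM)

lemma prob_Q: "prob_space Q"
  unfolding Q_def by (rule prob_space_PiM) (rule measure_pmf.prob_space_axioms)

interpretation Qp: prob_space Q by (rule prob_Q)

lemma eps1: "measure (measure_pmf eps_pmf) {1} = 1/4"
  unfolding eps_pmf_def by (simp add: measure_pmf_single pmf_of_multiset)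

lemma eps2: "measure (measure_pmf eps_pmf) {-1,0} = 3/4"
  unfolding eps_pmf_def by (simp add: measure_measure_pmf_finite pmf_of_multiset)

definition piL :: "nat \<Rightarrow> real" where
  "piL L = (1/4)^L * (3/4)"

lemma sets_NH: "{w. NH L n w} \<in> sets Q"
  using pred_NH[of L n] by (simp add: pred_def space_Q)
lemma sets_hit: "{w. hit L w j} \<in> sets Q"
  using pred_hit[of L j] by (simp add: pred_def space_Q)
lemma sets_pat: "{w. pat L w} \<in> sets Q"
  using pred_pat[of L] by (simp add: pred_def space_Q)
lemma sets_NH_hit: "{w. NH L n w \<and> hit L w j} \<in> sets Q"
proof -
  have "Measurable.pred Q (\<lambda>w. NH L n w \<and> hit L w j)"
    by (intro pred_intros_logic pred_NH pred_hit)
  then show ?thesis by (simp add: pred_def space_Q)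
qed

lemma emeas_pat: "emeasure Q {w. pat L w} = ennreal (piL L)"
proof -
  let ?X = "\<lambda>i::nat. if i < L then {1::int} else {-1,0}"
  have eq: "{w. pat L w} = {x\<in>space (Pi\<^sub>M UNIV (\<lambda>_. measure_pmf eps_pmf)). \<forall>i\<in>{..L}. x i \<in> ?X i}"
    by (auto simp: pat_def space_PiM le_less)
  have "emeasure Q {w. pat L w} = (\<Prod>i\<in>{..L}. emeasure (measure_pmf eps_pmf) (?X i))"
    unfolding eq Q_def by (rule QS.emeasure_PiM_Collect) auto
  also have "\<dots> = (\<Prod>i\<in>{..L}. ennreal (if i < L then 1/4 else 3/4))"
    by (intro prod.cong refl) (simp add: measure_pmf.emeasure_eq_measure eps1 eps2)
  also have "\<dots> = ennreal (\<Prod>i\<in>{..L}. (if i < L then 1/4 else 3/4))"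
    by (simp add: prod_ennreal)
  also have "(\<Prod>i\<in>{..L}. (if i < L then 1/4 else 3/4::real)) = piL L"
  proof -
    have "{..L} = insert L {..<L}" by auto
    then have "(\<Prod>i\<in>{..L}. (if i < L then 1/4 else 3/4::real)) = 3/4 * (\<Prod>i\<in>{..<L}. (if i < L then 1/4 else 3/4::real))"
      by simp
    also have "(\<Prod>i\<in>{..<L}. (if i < L then 1/4 else 3/4::real)) = (\<Prod>i\<in>{..<L}. 1/4)"
      by (intro prod.cong) auto
    finally show ?thesis by (simp add: piL_def)
  qed
  finally show ?thesis .
qed

lemma meas_pat: "measure Q {w. pat L w} = piL L"
  using emeas_pat by (simp add: Qp.emeasure_eq_measure piL_def)

lemma comb_eq: "distr (Q \<Otimes>\<^sub>M Q) Q (\<lambda>(\<omega>, \<omega>'). comb_seq s \<omega> \<omega>') = Q"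
  unfolding Q_def by (rule QS.PiM_comb_seq)

lemma meas_comb: "(\<lambda>(\<omega>, \<omega>'). comb_seq s \<omega> \<omega>') \<in> measurable (Q \<Otimes>\<^sub>M Q) Q"
  unfolding Q_def by (rule measurable_comb_seq)

lemma hit_local:
  assumes "\<And>i. i < j \<Longrightarrow> w i = v i"
  shows "hit L w j = hit L v j"
proof (cases "j \<ge> L + 1")
  case True
  have a: "\<forall>k\<in>{j-L..j-1}. w (k-1) = v (k-1)" using True assms by auto
  have b: "w (j-1) = v (j-1)" using True assms by auto
  show ?thesis unfolding hit_def eps_def using a b by auto
qed (simp add: hit_def)

lemma NH_local:
  assumes "\<And>i. i < n \<Longrightarrow> w i = v i"
  shows "NH L n w = NH L n v"
proof -
  have "\<forall>j\<le>n. hit L w j = hit L v j"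
    using hit_local assms by (metis less_le_trans)
  then show ?thesis unfolding NH_def by auto
qed

lemma comb_seq_add': "comb_seq s \<omega> \<omega>' (s + i) = \<omega>' i"
  by (simp add: comb_seq_def)

lemma NH_comb: "NH L s (comb_seq s \<omega> \<omega>') = NH L s \<omega>"
  by (rule NH_local) (simp add: comb_seq_less)

lemma hit_comb: "hit L (comb_seq s \<omega> \<omega>') (s+L+1) = pat L \<omega>'"
proof -
  have A: "(\<forall>k\<in>{s+L+1-L..s+L+1-1}. comb_seq s \<omega> \<omega>' (k-1) = 1) \<longleftrightarrow> (\<forall>i<L. \<omega>' i = 1)"
  proof
    assume H: "\<forall>k\<in>{s+L+1-L..s+L+1-1}. comb_seq s \<omega> \<omega>' (k-1) = 1"
    show "\<forall>i<L. \<omega>' i = 1"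
    proof (intro allI impI)
      fix i assume "i < L"
      then have "s+i+1 \<in> {s+L+1-L..s+L+1-1}" by auto
      with H have "comb_seq s \<omega> \<omega>' (s+i) = 1" by force
      then show "\<omega>' i = 1" by (simp add: comb_seq_add')
    qed
  next
    assume H: "\<forall>i<L. \<omega>' i = 1"
    show "\<forall>k\<in>{s+L+1-L..s+L+1-1}. comb_seq s \<omega> \<omega>' (k-1) = 1"
    proof
      fix k assume k: "k \<in> {s+L+1-L..s+L+1-1}"
      then have "k - 1 = s + (k - 1 - s)" "k - 1 - s < L" by auto
      then show "comb_seq s \<omega> \<omega>' (k-1) = 1" using H by (metis comb_seq_add')
    qed
  qed
  have B: "comb_seq s \<omega> \<omega>' (s+L+1-1) = \<omega>' L"
    using comb_seq_add'[of s \<omega> \<omega>' L] by simp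
  show ?thesis unfolding hit_def eps_def pat_def using A B by simp
qed

lemma hit_comb': "hit L (comb_seq s \<omega> \<omega>') (Suc (s+L)) = pat L \<omega>'"
  using hit_comb[of L s \<omega> \<omega>'] by simp

lemma prod_meas: "measure Q {w. NH L s w \<and> hit L w (s+L+1)} = measure Q {w. NH L s w} * piL L"
proof -
  let ?f = "\<lambda>(\<omega>, \<omega>'). comb_seq s \<omega> \<omega>'"
  let ?E = "{w. NH L s w \<and> hit L w (s+L+1)}"
  have pre: "?f -` ?E \<inter> space (Q \<Otimes>\<^sub>M Q) = {w. NH L s w} \<times> {w. pat L w}"
    by (auto simp: space_pair_measure space_Q NH_comb hit_comb')
  have "emeasure Q ?E = emeasure (distr (Q \<Otimes>\<^sub>M Q) Q ?f) ?E" by (simp add: comb_eq)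
  also have "\<dots> = emeasure (Q \<Otimes>\<^sub>M Q) ({w. NH L s w} \<times> {w. pat L w})"
    unfolding pre[symmetric] by (rule emeasure_distr[OF meas_comb sets_NH_hit])
  also have "\<dots> = emeasure Q {w. NH L s w} * emeasure Q {w. pat L w}"
    by (rule Qp.emeasure_pair_measure_Times[OF sets_NH sets_pat])
  finally have "ennreal (measure Q ?E) = ennreal (measure Q {w. NH L s w} * measure Q {w. pat L w})"
    by (simp add: Qp.emeasure_eq_measure ennreal_mult)
  then show ?thesis unfolding meas_pat by (subst (asm) ennreal_inj) (auto simp: piL_def)
qed

lemma hit_meas: "measure Q {w. hit L w (s+L+1)} = piL L"
proof -
  let ?f = "\<lambda>(\<omega>, \<omega>'). comb_seq s \<omega> \<omega>'"
  let ?E = "{w. hit L w (s+L+1)}"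
  have pre: "?f -` ?E \<inter> space (Q \<Otimes>\<^sub>M Q) = space Q \<times> {w. pat L w}"
    by (auto simp: space_pair_measure space_Q hit_comb')
  have "emeasure Q ?E = emeasure (distr (Q \<Otimes>\<^sub>M Q) Q ?f) ?E" by (simp add: comb_eq)
  also have "\<dots> = emeasure (Q \<Otimes>\<^sub>M Q) (space Q \<times> {w. pat L w})"
    unfolding pre[symmetric] by (rule emeasure_distr[OF meas_comb sets_hit])
  also have "\<dots> = emeasure Q (space Q) * emeasure Q {w. pat L w}"
    by (rule Qp.emeasure_pair_measure_Times[OF sets.top sets_pat])
  finally have "ennreal (measure Q ?E) = ennreal (measure Q {w. pat L w})"
    by (simp add: Qp.emeasure_eq_measure Qp.prob_space)
  then show ?thesis unfolding meas_pat by (subst (asm) ennreal_inj) (auto simp: piL_def)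
qed



lemma NH_small: "n \<le> L \<Longrightarrow> NH L n w" unfolding NH_def hit_def by auto
lemma NH_mono: "m \<le> n \<Longrightarrow> NH L n w \<Longrightarrow> NH L m w" unfolding NH_def by auto

definition u :: "nat \<Rightarrow> nat \<Rightarrow> real" where "u L n = measure Q {w. NH L n w}"

lemma u_small: "n \<le> L \<Longrightarrow> u L n = 1"
proof -
  assume "n \<le> L"
  then have "{w. NH L n w} = space Q" using NH_small by (auto simp: space_Q)
  then show ?thesis by (simp add: u_def Qp.prob_space)
qed

lemma u_anti: "m \<le> n \<Longrightarrow> u L n \<le> u L m"
  unfolding u_def by (rule Qp.finite_measure_mono) (auto intro: NH_mono simp: sets_NH)

lemma piL_nonneg: "0 \<le> piL L" by (simp add: piL_def)
lemma piL_le: "piL L \<le> 3/4"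
proof -
  have "(1/4::real)^L \<le> 1" by (rule power_le_one) auto
  then show ?thesis by (simp add: piL_def)
qed

lemma contain:
  assumes "NH L s w" "hit L w (s+L+1)"
  shows "NH L (s+L) w"
  unfolding NH_def
proof
  assume "\<exists>j\<le>s+L. hit L w j"
  then obtain j where j: "j \<le> s+L" "hit L w j" by auto
  show False
  proof (cases "j \<le> s")
    case True
    then show False using assms(1) j(2) unfolding NH_def by auto
  next
    case False
    have h1: "w (j-1) \<in> {-1,0}" using j(2) unfolding hit_def eps_def by auto
    have "\<forall>k\<in>{s+L+1-L..s+L+1-1}. w (k-1) = 1" using assms(2) unfolding hit_def eps_def by auto
    moreover have "j \<in> {s+L+1-L..s+L+1-1}" using False j(1) by auto
    ultimately have "w (j-1) = 1" by blast
    with h1 show False by auto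
  qed
qed

lemma step_upper: "u L (Suc (s+L)) \<le> (1 - piL L) * u L (s+L)"
proof -
  let ?A = "{w. NH L (Suc (s+L)) w}"
  let ?B = "{w. NH L (s+L) w}"
  let ?C = "{w. NH L s w \<and> hit L w (s+L+1)}"
  have CB: "?C \<subseteq> ?B" using contain by auto
  have AB: "?A \<subseteq> ?B - ?C"
  proof
    fix w assume "w \<in> ?A"
    then have "NH L (Suc (s+L)) w" by simp
    then have "NH L (s+L) w" "\<not> hit L w (s+L+1)" using NH_mono[of "s+L" "Suc (s+L)" L w]
      unfolding NH_def by auto
    then show "w \<in> ?B - ?C" by auto
  qed
  have "u L (Suc (s+L)) \<le> measure Q (?B - ?C)"
    unfolding u_def by (rule Qp.finite_measure_mono[OF AB]) (intro sets.Diff sets_NH sets_NH_hit)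
  also have "\<dots> = u L (s+L) - measure Q ?C"
    unfolding u_def by (rule Qp.finite_measure_Diff[OF sets_NH sets_NH_hit CB])
  also have "measure Q ?C = u L s * piL L" unfolding u_def by (rule prod_meas)
  finally have 1: "u L (Suc (s+L)) \<le> u L (s+L) - u L s * piL L" .
  have "u L (s+L) * piL L \<le> u L s * piL L" by (intro mult_right_mono u_anti piL_nonneg) auto
  with 1 show ?thesis by (simp add: algebra_simps)
qed

lemma step_lower: "u L (s+L) \<le> u L (Suc (s+L)) + piL L"
proof -
  let ?A = "{w. NH L (Suc (s+L)) w}"
  let ?B = "{w. NH L (s+L) w}"
  let ?H = "{w. hit L w (s+L+1)}"
  have sub: "?B \<subseteq> ?A \<union> ?H"
  proof
    fix w assume "w \<in> ?B"
    then have B: "NH L (s+L) w" by simp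
    show "w \<in> ?A \<union> ?H"
    proof (cases "NH L (Suc (s+L)) w")
      case False
      then obtain j where "j \<le> Suc (s+L)" "hit L w j" unfolding NH_def by auto
      moreover have "\<not> j \<le> s + L" using B \<open>hit L w j\<close> unfolding NH_def by auto
      ultimately have "j = s+L+1" by auto
      with \<open>hit L w j\<close> show ?thesis by auto
    qed auto
  qed
  have "u L (s+L) \<le> measure Q (?A \<union> ?H)"
    unfolding u_def by (rule Qp.finite_measure_mono[OF sub]) (intro sets.Un sets_NH sets_hit)
  also have "\<dots> \<le> measure Q ?A + measure Q ?H"
    by (rule measure_subadditive) (simp_all add: sets_NH sets_hit Qp.emeasure_eq_measure)
  also have "measure Q ?H = piL L" by (rule hit_meas)
  finally show ?thesis by (simp add: u_def)
qed

lemma u_upper: "u L n \<le> (1 - piL L)^(n - L)"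
proof (induction n)
  case 0
  then show ?case by (simp add: u_def)
next
  case (Suc n)
  show ?case
  proof (cases "Suc n \<le> L")
    case True
    then show ?thesis by (simp add: u_small)
  next
    case False
    then obtain s where s: "n = s + L" by (metis add.commute le_Suc_ex not_less_eq_eq)
    have "u L (Suc n) \<le> (1 - piL L) * u L n" unfolding s by (rule step_upper)
    also have "\<dots> \<le> (1 - piL L) * (1 - piL L)^(n - L)"
      by (rule mult_left_mono[OF Suc.IH]) (use piL_le[of L] in auto)
    also have "\<dots> = (1 - piL L)^(Suc n - L)" using s by simp
    finally show ?thesis .
  qed
qed

lemma u_lower: "1 - real n * piL L \<le> u L n"
proof (induction n)
  case 0
  then show ?case by (simp add: u_small)
next
  case (Suc n)
  show ?case
  proof (cases "Suc n \<le> L")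
    case True
    then show ?thesis using piL_nonneg[of L] by (simp add: u_small)
  next
    case False
    then obtain s where s: "n = s + L" by (metis add.commute le_Suc_ex not_less_eq_eq)
    have "u L n \<le> u L (Suc n) + piL L" unfolding s by (rule step_lower)
    with Suc.IH show ?thesis by (simp add: algebra_simps)
  qed
qed

lemma tau_gt: "NH L n w \<longleftrightarrow> enat n < tau1 L w"
proof (cases "\<exists>j. hit L w j")
  case True
  then have t: "tau1 L w = enat (LEAST j. hit L w j)" by (simp add: tau1_def)
  have hl: "hit L w (LEAST j. hit L w j)" using True by (metis LeastI)
  show ?thesis
  proof
    assume "NH L n w"
    then have "\<not> (LEAST j. hit L w j) \<le> n" using hl unfolding NH_def by auto
    then show "enat n < tau1 L w" using t by simp
  next
    assume "enat n < tau1 L w"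
    then have "n < (LEAST j. hit L w j)" using t by simp
    then show "NH L n w" unfolding NH_def using Least_le[of "hit L w"] by (meson le_less_trans not_le)
  qed
next
  case False
  then show ?thesis by (simp add: tau1_def NH_def)
qed



lemma four_pow_piL: "(4::real)^L * piL L = 3/4"
proof -
  have "(4::real)^L * (1/4)^L = 1" by (simp add: power_mult_distrib[symmetric])
  then show ?thesis by (simp add: piL_def)
qed

lemma lower_int:
  assumes "p \<ge> 0"
  shows "ennreal (1/4) \<le> (\<integral>\<^sup>+ w. taubar_pow p L w \<partial>Q)"
proof -
  define T :: nat where "T = 4^L"
  have T1: "T \<ge> 1" unfolding T_def by simp
  have rT: "real T = 4^L" unfolding T_def by simp
  have "real (T - 1) * piL L \<le> real T * piL L"
    by (intro mult_right_mono piL_nonneg) auto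
  also have "\<dots> = 3/4" using four_pow_piL rT by simp
  finally have "1/4 \<le> u L (T - 1)" using u_lower[of "T-1" L] by linarith
  then have "ennreal (1/4) \<le> ennreal (u L (T - 1))" by (rule ennreal_leI)
  also have "\<dots> = emeasure Q {w. NH L (T-1) w}" by (simp add: u_def Qp.emeasure_eq_measure)
  also have "\<dots> = (\<integral>\<^sup>+ w. indicator {w. NH L (T-1) w} w \<partial>Q)"
    by (rule nn_integral_indicator[symmetric]) (rule sets_NH)
  also have "\<dots> \<le> (\<integral>\<^sup>+ w. taubar_pow p L w \<partial>Q)"
  proof (rule nn_integral_mono)
    fix w
    show "indicator {w. NH L (T-1) w} w \<le> taubar_pow p L w"
    proof (cases "NH L (T-1) w")
      case True
      then have gt: "enat (T-1) < tau1 L w" by (simp add: tau_gt)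
      show ?thesis
      proof (cases "tau1 L w")
        case (enat m)
        then have "T \<le> m" using gt T1 by simp
        then have "1 \<le> real m / 4^L" using rT by (simp add: pos_divide_le_eq)
        then have "1 \<le> (real m / 4^L) powr p" using assms by (rule ge_one_powr_ge_zero)
        then show ?thesis using True enat by (simp add: taubar_pow_def)
      next
        case infinity
        then show ?thesis by (simp add: taubar_pow_def indicator_def)
      qed
    qed simp
  qed
  finally show ?thesis .
qed

definition Cp :: "real \<Rightarrow> real" where
  "Cp p = (\<Sum>k. (real k + 1) powr p * exp (-(3/8) * real k))"

lemma summable_Cp: "summable (\<lambda>k. (real k + 1) powr p * exp (-(3/8) * real k))"
proof (rule summable_comparison_test_bigo)
  show "(\<lambda>k. (real k + 1) powr p * exp (-(3/8) * real k)) \<in> O(\<lambda>k. exp (-(1/4) * real k))"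
    by real_asymp
  have "(\<lambda>k. norm (exp (-(1/4) * real k))) = (\<lambda>k. exp (-(1/4)) ^ k)"
    by (simp add: exp_of_nat_mult[symmetric] mult.commute)
  moreover have "summable (\<lambda>k. exp (-(1/4::real)) ^ k)" by (rule summable_geometric) simp
  ultimately show "summable (\<lambda>k. norm (exp (-(1/4::real) * real k)))" by simp
qed

lemma Cp_pos: "Cp p \<ge> 1"
proof -
  have "(\<Sum>k\<in>{0}. (real k + 1) powr p * exp (-(3/8) * real k)) \<le> Cp p"
    unfolding Cp_def by (rule sum_le_suminf[OF summable_Cp]) auto
  then show ?thesis by simp
qed

lemma L_le: "Suc l \<le> 2 * 4^l"
proof (induction l)
  case (Suc l)
  then show ?case by simp
qed simp

lemma u_exp:
  assumes "L \<ge> 1"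
  shows "u L (k * 4^L) \<le> exp (-(3/8) * real k)"
proof -
  obtain l where l: "L = Suc l" using assms by (cases L) auto
  define h :: nat where "h = 2 * 4^l"
  have T: "(4::nat)^L = 2 * h" unfolding h_def l by simp
  have Lh: "L \<le> h" unfolding h_def l by (rule L_le)
  have kh: "k * h \<le> k * 4^L - L"
  proof (cases k)
    case 0 then show ?thesis by simp
  next
    case (Suc k')
    then have "h \<le> k * h" by simp
    moreover have "k * 4^L = k*h + k*h" unfolding T by simp
    ultimately show ?thesis using Lh by linarith
  qed
  have pih: "piL L * real h = 3/8"
  proof -
    have "(1/4::real)^l * 4^l = 1" by (simp add: power_mult_distrib[symmetric])
    then show ?thesis unfolding piL_def h_def l by simp
  qed
  have p0: "0 \<le> 1 - piL L" "1 - piL L \<le> 1" using piL_le[of L] piL_nonneg[of L] by auto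
  have "u L (k * 4^L) \<le> (1 - piL L)^(k * 4^L - L)" by (rule u_upper)
  also have "\<dots> \<le> (1 - piL L)^(k * h)" by (rule power_decreasing[OF kh p0])
  also have "\<dots> \<le> (exp (- piL L))^(k * h)"
  proof (rule power_mono)
    show "1 - piL L \<le> exp (- piL L)" using exp_ge_add_one_self[of "- piL L"] by simp
  qed (use p0 in auto)
  also have "\<dots> = exp (- (piL L * real h) * real k)"
    by (simp add: exp_of_nat_mult[symmetric] algebra_simps)
  also have "\<dots> = exp (-(3/8) * real k)" using pih by simp
  finally show ?thesis .
qed

lemma upper_int:
  assumes "p \<ge> 0" "L \<ge> 1"
  shows "(\<integral>\<^sup>+ w. taubar_pow p L w \<partial>Q) \<le> ennreal (Cp p)"
proof -
  define T :: nat where "T = 4^L"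
  have T1: "T \<ge> 1" unfolding T_def by simp
  have rT: "real T = 4^L" unfolding T_def by simp
  let ?g = "\<lambda>k w. ennreal ((real k + 1) powr p) * indicator {w. NH L (k*T) w} w"
  have pw: "taubar_pow p L w \<le> (\<Sum>k. ?g k w)" for w
  proof (cases "tau1 L w")
    case (enat m)
    have "L + 1 \<le> m"
    proof -
      have ex: "\<exists>j. hit L w j"
      proof (rule ccontr)
        assume "\<not> (\<exists>j. hit L w j)"
        then have "tau1 L w = \<infinity>" unfolding tau1_def by simp
        with enat show False by simp
      qed
      have m: "m = (LEAST j. hit L w j)" using enat ex unfolding tau1_def by simp
      have "hit L w m" unfolding m using ex by (rule LeastI_ex)
      then show ?thesis unfolding hit_def by blast
    qed
    define k0 where "k0 = (m - 1) div T"
    have a: "k0 * T \<le> m - 1" unfolding k0_def by (simp add: div_times_less_eq_dividend)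
    have b: "m - 1 < (k0 + 1) * T"
    proof -
      define r where "r = (m-1) mod T"
      have "r < T" using T1 unfolding r_def by simp
      moreover have "(m-1) = k0*T + r" unfolding k0_def r_def by simp
      moreover have "(k0 + 1) * T = k0 * T + T" by simp
      ultimately show ?thesis by linarith
    qed
    have NHk: "NH L (k0 * T) w" using a \<open>L + 1 \<le> m\<close> enat by (simp add: tau_gt)
    have "m \<le> (k0 + 1) * T" using b by simp
    then have "real m \<le> real ((k0 + 1) * T)" by (rule of_nat_mono)
    then have "real m \<le> (real k0 + 1) * real T" by (simp add: algebra_simps)
    then have "real m / 4^L \<le> real k0 + 1" using rT by (simp add: pos_divide_le_eq)
    then have "(real m / 4^L) powr p \<le> (real k0 + 1) powr p"
      by (intro powr_mono2 assms) auto
    then have "taubar_pow p L w \<le> ?g k0 w" using enat NHk by (simp add: taubar_pow_def)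
    also have "\<dots> \<le> (\<Sum>k. ?g k w)"
    proof -
      have "(\<Sum>k\<in>{k0}. G k) \<le> suminf G" for G :: "nat \<Rightarrow> ennreal"
        by (rule sum_le_suminf[OF summableI]) auto
      then have "G k0 \<le> suminf G" for G :: "nat \<Rightarrow> ennreal" by simp
      then show ?thesis .
    qed
    finally show ?thesis .
  next
    case infinity
    then have "NH L n w" for n by (simp add: tau_gt)
    then have g: "?g k w = ennreal ((real k + 1) powr p)" for k by simp
    have ns: "\<not> summable (\<lambda>k. (real k + 1) powr p)"
    proof
      assume "summable (\<lambda>k. (real k + 1) powr p)"
      then have "(\<lambda>k. (real k + 1) powr p) \<longlonglongrightarrow> 0" by (rule summable_LIMSEQ_zero)
      moreover have "\<forall>k. 1 \<le> (real k + 1) powr p" using assms(1) by (auto intro: ge_one_powr_ge_zero)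
      ultimately have "1 \<le> (0::real)" by (intro LIMSEQ_le_const) auto
      then show False by simp
    qed
    have "(\<Sum>k. ?g k w) = top"
      unfolding g by (rule summable_iff_suminf_neq_top[OF _ ns]) simp
    then show ?thesis by simp
  qed
  have meas: "?g k \<in> borel_measurable Q" for k
    by (intro borel_measurable_times_ennreal borel_measurable_const borel_measurable_indicator sets_NH)
  have "(\<integral>\<^sup>+ w. taubar_pow p L w \<partial>Q) \<le> (\<integral>\<^sup>+ w. (\<Sum>k. ?g k w) \<partial>Q)"
    by (rule nn_integral_mono) (rule pw)
  also have "\<dots> = (\<Sum>k. (\<integral>\<^sup>+ w. ?g k w \<partial>Q))"
    by (rule nn_integral_suminf) (rule meas)
  also have "\<dots> = (\<Sum>k. ennreal ((real k + 1) powr p) * emeasure Q {w. NH L (k*T) w})"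
    by (subst nn_integral_cmult_indicator) (simp_all add: sets_NH)
  also have "\<dots> \<le> (\<Sum>k. ennreal ((real k + 1) powr p * exp (-(3/8) * real k)))"
  proof (rule suminf_le)
    fix k
    have "emeasure Q {w. NH L (k*T) w} = ennreal (u L (k * 4^L))"
      by (simp add: u_def Qp.emeasure_eq_measure T_def)
    also have "\<dots> \<le> ennreal (exp (-(3/8) * real k))"
      by (rule ennreal_leI) (rule u_exp[OF assms(2)])
    finally have "emeasure Q {w. NH L (k*T) w} \<le> ennreal (exp (-(3/8) * real k))" .
    then have "ennreal ((real k + 1) powr p) * emeasure Q {w. NH L (k*T) w}
        \<le> ennreal ((real k + 1) powr p) * ennreal (exp (-(3/8) * real k))"
      by (rule mult_left_mono) simp
    then show "ennreal ((real k + 1) powr p) * emeasure Q {w. NH L (k*T) w}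
        \<le> ennreal ((real k + 1) powr p * exp (-(3/8) * real k))"
      by (simp add: ennreal_mult)
  qed simp_all
  also have "\<dots> = ennreal (Cp p)"
    unfolding Cp_def
    by (rule suminf_ennreal[OF _ ennreal_suminf_neq_top[OF summable_Cp]]) auto
  finally show ?thesis .
qed


theorem lemma3p1:
  fixes p :: real
  assumes "p \<ge> 1"
  shows "\<exists>c c'. c > 0 \<and> c' > 0 \<and>
           (\<forall>L::nat. L \<ge> 1 \<longrightarrow>
              ennreal (c powr p) \<le> (\<integral>\<^sup>+ w. taubar_pow p L w \<partial>Q) \<and>
              (\<integral>\<^sup>+ w. taubar_pow p L w \<partial>Q) \<le> ennreal (c' powr p))"
proof -
  have p0: "p \<ge> 0" "p \<noteq> 0" using assms by auto
  define c where "c = (1/4::real) powr (1/p)"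
  define c' where "c' = Cp p powr (1/p)"
  have cp: "c powr p = 1/4" unfolding c_def using p0 by (simp add: powr_powr)
  have cp': "c' powr p = Cp p" unfolding c'_def using p0 Cp_pos[of p] by (simp add: powr_powr)
  have cpos: "c > 0" unfolding c_def by simp
  have cpos': "c' > 0" unfolding c'_def using Cp_pos[of p] by simp
  show ?thesis
  proof (intro exI conjI allI impI)
    fix L :: nat assume L: "L \<ge> 1"
    show "ennreal (c powr p) \<le> (\<integral>\<^sup>+ w. taubar_pow p L w \<partial>Q)"
      unfolding cp by (rule lower_int[OF p0(1)])
    show "(\<integral>\<^sup>+ w. taubar_pow p L w \<partial>Q) \<le> ennreal (c' powr p)"
      unfolding cp' by (rule upper_int[OF p0(1) L])
  qed (rule cpos, rule cpos')
qed

end
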